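(* Let $P(X,Y,t)=\big(X+\frac1X-2\big)\big(Y+\frac1Y+2\big)+2i\dfrac{(t-i)^4}{t^3-t}$ and $D=\{(X,Y,t)\in(\mathbb{C}^\times)^3 : P(X,Y,t)=0,\ |X|=|Y|=1,\ |t|>1\}$. Let $C_1$ (resp. $C_2$) be the circle with center $1$ (resp. $-1$) passing through $i$ in the complex plane. Then the image of $D$ under $(X,Y,t)\mapsto t$ is the union of the two arcs $C_1\cap\{|t|>1\}$ and $C_2\cap\{|t|>1\}$. *)

theory Defs
  imports Complex_Main
begin

definition P9 :: "complex \<Rightarrow> complex \<Rightarrow> complex \<Rightarrow> complex" where
  "P9 X Y t = (X + 1/X - 2) * (Y + 1/Y + 2) + 2 * \<i> * (t - \<i>)^4 / (t^3 - t)"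

definition D9 :: "(complex \<times> complex \<times> complex) set" where
  "D9 = {(X, Y, t). X \<noteq> 0 \<and> Y \<noteq> 0 \<and> t \<noteq> 0 \<and> P9 X Y t = 0 \<and>
                    cmod X = 1 \<and> cmod Y = 1 \<and> cmod t > 1}"

definition C1 :: "complex set" where "C1 = {t. cmod (t - 1) = cmod (\<i> - 1)}"
definition C2 :: "complex set" where "C2 = {t. cmod (t - (-1)) = cmod (\<i> - (-1))}"

end

theory Submission
  imports Defs
begin

lemma facX: "cmod X = 1 \<Longrightarrow> X + 1/X - 2 = complex_of_real (2*Re X - 2)"
proof -
  assume h: "cmod X = 1"
  have "1/X = cnj X" using divide_conv_cnj[OF h, of 1] by simp
  then show ?thesis by (simp add: complex_eq_iff)
qed

lemma facY: "cmod Y = 1 \<Longrightarrow> Y + 1/Y + 2 = complex_of_real (2*Re Y + 2)"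
proof -
  assume h: "cmod Y = 1"
  have "1/Y = cnj Y" using divide_conv_cnj[OF h, of 1] by simp
  then show ?thesis by (simp add: complex_eq_iff)
qed

lemma range_first:
  "(\<exists>X Y. X \<noteq> 0 \<and> Y \<noteq> 0 \<and> cmod X = 1 \<and> cmod Y = 1 \<and> (X+1/X-2)*(Y+1/Y+2) = c)
   \<longleftrightarrow> (\<exists>r. -16 \<le> r \<and> r \<le> 0 \<and> c = complex_of_real r)"
proof
  assume "\<exists>X Y. X \<noteq> 0 \<and> Y \<noteq> 0 \<and> cmod X = 1 \<and> cmod Y = 1 \<and> (X+1/X-2)*(Y+1/Y+2) = c"
  then obtain X Y where h: "cmod X = 1" "cmod Y = 1" "(X+1/X-2)*(Y+1/Y+2) = c" by blast
  have a: "\<bar>Re X\<bar> \<le> 1" "\<bar>Re Y\<bar> \<le> 1" using abs_Re_le_cmod[of X] abs_Re_le_cmod[of Y] h by auto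
  have c: "c = complex_of_real ((2*Re X - 2)*(2*Re Y + 2))"
    using h facX[OF h(1)] facY[OF h(2)] by simp
  have "(2*Re X - 2)*(2*Re Y + 2) \<le> 0"
    using a by (intro mult_nonpos_nonneg) auto
  moreover have "-16 \<le> (2*Re X - 2)*(2*Re Y + 2)"
  proof -
    have "(2 - 2*Re X)*(2*Re Y + 2) \<le> 4 * 4"
      using a by (intro mult_mono) auto
    then show ?thesis by (simp add: algebra_simps)
  qed
  ultimately show "\<exists>r. -16 \<le> r \<and> r \<le> 0 \<and> c = complex_of_real r" using c by blast
next
  assume "\<exists>r. -16 \<le> r \<and> r \<le> 0 \<and> c = complex_of_real r"
  then obtain r where r: "-16 \<le> r" "r \<le> 0" "c = complex_of_real r" by blast
  define a where "a = 1 + r/8"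
  have a1: "a^2 \<le> 1" using r unfolding a_def by (simp add: abs_square_le_1)
  define X where "X = Complex a (sqrt (1 - a^2))"
  have nX: "cmod X = 1" unfolding X_def cmod_def using a1 by simp
  have nY: "cmod (1::complex) = 1" by simp
  have "(X+1/X-2)*(1+1/1+2) = complex_of_real ((2*a - 2)*4)"
    using facX[OF nX] unfolding X_def by simp
  also have "\<dots> = c" using r unfolding a_def by (simp add: algebra_simps)
  finally show "\<exists>X Y. X \<noteq> 0 \<and> Y \<noteq> 0 \<and> cmod X = 1 \<and> cmod Y = 1 \<and> (X+1/X-2)*(Y+1/Y+2) = c"
    using nX by (intro exI[of _ X] exI[of _ 1]) auto
qed


lemma pow4: "(Complex a b)^4 = Complex (a^4-6*a^2*b^2+b^4) (4*a^3*b-4*a*b^3)"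
  by (simp add: complex_eq_iff numeral_eq_Suc algebra_simps power2_eq_square)

lemma diff4: "(t+\<i>)^4 - (t-\<i>)^4 = 8*\<i>*(t^3-t)"
  by (simp add: numeral_eq_Suc algebra_simps)

lemma vform: "(Complex x y - \<i>) * cnj (Complex x y + \<i>) = Complex (x^2+y^2-1) (-2*x)"
  by (simp add: complex_eq_iff algebra_simps power2_eq_square)

lemma nform: "(Complex x y + \<i>) * cnj (Complex x y + \<i>) = complex_of_real (x^2+(y+1)^2)"
  by (simp add: complex_eq_iff algebra_simps power2_eq_square)

lemma keyeq:
  fixes x y r :: real
  defines "t \<equiv> Complex x y"
  assumes n: "x^2+y^2 > 1"
  shows "2*\<i>*(t-\<i>)^4/(t^3-t) = complex_of_real r \<longleftrightarrow>
    (16 - r) * (Complex (x^2+y^2-1) (-2*x))^4 = - r * complex_of_real ((x^2+(y+1)^2)^4)" (is "?L \<longleftrightarrow> ?R")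
proof -
  have nt: "cmod t > 1" using n unfolding t_def cmod_def
    by (metis one_less_power real_less_rsqrt power2_eq_square complex.sel one_power2) 
  have t0: "t \<noteq> 0" "t \<noteq> 1" "t \<noteq> -1" using nt by auto
  have "t^3 - t = t*(t-1)*(t+1)" by (simp add: algebra_simps numeral_eq_Suc)
  then have d: "t^3 - t \<noteq> 0" using t0 by (auto simp: add_eq_0_iff minus_equation_iff[of t])
  have ti: "t + \<i> \<noteq> 0" using nt by (metis add_eq_0_iff norm_ii norm_minus_cancel order_less_irrefl)
  have cti: "cnj (t + \<i>) \<noteq> 0" using ti by (metis complex_cnj_zero_iff)
  define z where "z = t - \<i>"
  define z' where "z' = t + \<i>"
  have dd: "t^3 - t = (z'^4 - z^4) / (8*\<i>)" unfolding z_def z'_def diff4 by simp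
  have "2*\<i>*(t-\<i>)^4/(t^3-t) = complex_of_real r \<longleftrightarrow> 2*\<i>*z^4 = r*(t^3-t)"
    using d unfolding z_def by (auto simp: field_simps)
  also have "\<dots> \<longleftrightarrow> 2*\<i>*z^4*(8*\<i>) = r*(z'^4 - z^4)"
    unfolding dd by (auto simp: field_simps)
  also have "\<dots> \<longleftrightarrow> (16 - r) * z^4 = - r * z'^4"
    by (auto simp: algebra_simps)
  also have "\<dots> \<longleftrightarrow> (16 - r) * z^4 * cnj z'^4 = (- r * z'^4) * cnj z'^4"
  proof -
    have "cnj z'^4 \<noteq> 0" using cti unfolding z'_def by simp
    then show ?thesis using mult_right_cancel by blast
  qed
  also have "\<dots> \<longleftrightarrow> (16 - r) * (z * cnj z')^4 = - r * (z' * cnj z')^4"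
    by (simp add: power_mult_distrib mult.assoc)
  also have "\<dots> \<longleftrightarrow> ?R"
    unfolding z_def z'_def t_def vform nform by simp
  finally show ?thesis .
qed


lemma realpart:
  fixes a b Dr :: real
  assumes a: "a > 0" and D: "Dr > 0"
  shows "(\<exists>r. 0 \<le> r \<and> r \<le> 16 \<and> (16 - complex_of_real r) * (Complex a b)^4 = - complex_of_real r * complex_of_real Dr)
     \<longleftrightarrow> a^2 = b^2"
proof
  assume "\<exists>r. 0 \<le> r \<and> r \<le> 16 \<and> (16 - complex_of_real r) * (Complex a b)^4 = - complex_of_real r * complex_of_real Dr"
  then obtain r where r: "0 \<le> r" "r \<le> 16"
    and e: "(16 - complex_of_real r) * (Complex a b)^4 = - complex_of_real r * complex_of_real Dr" by blast
  have e1: "(16 - r) * (a^4-6*a^2*b^2+b^4) = - r * Dr"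
    and e2: "(16 - r) * (4*a^3*b-4*a*b^3) = 0"
    using arg_cong[OF e, of Re] arg_cong[OF e, of Im] unfolding pow4 by simp_all
  have "r \<noteq> 16" using e1 D by auto
  then have "4*a^3*b-4*a*b^3 = 0" using e2 by simp
  then have "a * b * (a^2 - b^2) = 0" by (simp add: algebra_simps power2_eq_square power3_eq_cube)
  then have "b = 0 \<or> a^2 = b^2" using a by auto
  moreover have "b \<noteq> 0"
  proof
    assume "b = 0"
    then have "(16 - r) * a^4 = - r * Dr" using e1 by simp
    moreover have "(16 - r) * a^4 > 0" using r \<open>r \<noteq> 16\<close> a by simp
    moreover have "- r * Dr \<le> 0" using r D by simp
    ultimately show False by linarith
  qed
  ultimately show "a^2 = b^2" by blast
next
  assume h: "a^2 = b^2"
  define s where "s = 4*a^4"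
  have s: "s > 0" using a unfolding s_def by simp
  define r where "r = 16*s/(s+Dr)"
  have r0: "0 \<le> r" using s D unfolding r_def by simp
  have r16: "r \<le> 16" using s D unfolding r_def by (simp add: field_simps)
  have re: "a^4-6*a^2*b^2+b^4 = - s" unfolding s_def
    using h by (simp add: power4_eq_xxxx power2_eq_square)
  have im: "4*a^3*b-4*a*b^3 = 0"
  proof -
    have "4*a^3*b-4*a*b^3 = 4*a*b*(a^2-b^2)" by (simp add: algebra_simps power2_eq_square power3_eq_cube)
    then show ?thesis using h by simp
  qed
  have "(16 - r) * (- s) = - r * Dr" unfolding r_def using s D by (simp add: field_simps)
  then have "(16 - complex_of_real r) * (Complex a b)^4 = - complex_of_real r * complex_of_real Dr"
    unfolding pow4 re im by (simp add: complex_eq_iff)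
  then show "\<exists>r. 0 \<le> r \<and> r \<le> 16 \<and> (16 - complex_of_real r) * (Complex a b)^4 = - complex_of_real r * complex_of_real Dr"
    using r0 r16 by blast
qed


lemma ncm: "cmod (Complex x y) > 1 \<longleftrightarrow> x^2+y^2 > 1"
  unfolding cmod_def by (simp add: real_sqrt_gt_1_iff)

lemma point:
  fixes x y :: real
  assumes n: "x^2+y^2 > 1"
  shows "(\<exists>X Y. (X, Y, Complex x y) \<in> D9) \<longleftrightarrow> (x^2+y^2-1)^2 = (-2*x)^2"
proof -
  define t where "t = Complex x y"
  define Q where "Q = 2*\<i>*(t-\<i>)^4/(t^3-t)"
  have nt: "cmod t > 1" using n ncm unfolding t_def by blast
  then have t0: "t \<noteq> 0" by auto
  have Dp: "(x^2+(y+1)^2)^4 > 0"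
  proof -
    have "x^2+(y+1)^2 \<noteq> 0"
    proof
      assume "x^2+(y+1)^2 = 0"
      then have "x = 0" "y = -1" by (auto simp: add_nonneg_eq_0_iff)
      then show False using n by simp
    qed
    then show ?thesis by (simp add: zero_less_power_eq)
  qed
  have "(\<exists>X Y. (X, Y, t) \<in> D9) \<longleftrightarrow>
    (\<exists>X Y. X \<noteq> 0 \<and> Y \<noteq> 0 \<and> cmod X = 1 \<and> cmod Y = 1 \<and> (X+1/X-2)*(Y+1/Y+2) = - Q)"
  proof -
    have e: "P9 X Y t = 0 \<longleftrightarrow> (X+1/X-2)*(Y+1/Y+2) = - Q" for X Y
      unfolding P9_def Q_def by (simp only: eq_neg_iff_add_eq_0 times_divide_eq_right mult.assoc)
    show ?thesis unfolding D9_def using nt t0 e by auto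
  qed
  also have "\<dots> \<longleftrightarrow> (\<exists>r. -16 \<le> r \<and> r \<le> 0 \<and> - Q = complex_of_real r)"
    by (rule range_first)
  also have "\<dots> \<longleftrightarrow> (\<exists>r. 0 \<le> r \<and> r \<le> 16 \<and> Q = complex_of_real r)"
  proof
    assume "\<exists>r. -16 \<le> r \<and> r \<le> 0 \<and> - Q = complex_of_real r"
    then obtain r where "-16 \<le> r \<and> r \<le> 0 \<and> - Q = complex_of_real r" by blast
    then show "\<exists>r. 0 \<le> r \<and> r \<le> 16 \<and> Q = complex_of_real r"
      by (intro exI[of _ "-r"]) (auto simp: minus_equation_iff[of Q])
  next
    assume "\<exists>r. 0 \<le> r \<and> r \<le> 16 \<and> Q = complex_of_real r"
    then obtain r where "0 \<le> r \<and> r \<le> 16 \<and> Q = complex_of_real r" by blast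
    then show "\<exists>r. -16 \<le> r \<and> r \<le> 0 \<and> - Q = complex_of_real r"
      by (intro exI[of _ "-r"]) auto
  qed
  also have "\<dots> \<longleftrightarrow> (\<exists>r. 0 \<le> r \<and> r \<le> 16 \<and> (16 - complex_of_real r) * (Complex (x^2+y^2-1) (-2*x))^4
       = - complex_of_real r * complex_of_real ((x^2+(y+1)^2)^4))"
    unfolding Q_def t_def using keyeq[OF n] by simp
  also have "\<dots> \<longleftrightarrow> (x^2+y^2-1)^2 = (-2*x)^2"
    by (rule realpart) (use n Dp in auto)
  finally show ?thesis unfolding t_def .
qed


lemma circ1: "Complex x y \<in> C1 \<longleftrightarrow> x^2+y^2-1 = 2*x"
proof -
  have "Complex x y \<in> C1 \<longleftrightarrow> (x-1)^2+y^2 = 2"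
    unfolding C1_def cmod_def by (simp add: complex_eq_iff)
  then show ?thesis by (simp add: power2_eq_square algebra_simps)
qed

lemma circ2: "Complex x y \<in> C2 \<longleftrightarrow> x^2+y^2-1 = -2*x"
proof -
  have "Complex x y \<in> C2 \<longleftrightarrow> (x+1)^2+y^2 = 2"
    unfolding C2_def cmod_def by (simp add: complex_eq_iff)
  then show ?thesis by (simp add: power2_eq_square algebra_simps)
qed

theorem lemma9p13:
  shows "(\<lambda>(X, Y, t). t) ` D9 = (C1 \<inter> {t. cmod t > 1}) \<union> (C2 \<inter> {t. cmod t > 1})"
proof (rule set_eqI)
  fix t :: complex
  obtain x y where t: "t = Complex x y" by (cases t) auto
  have img: "t \<in> (\<lambda>(X, Y, t). t) ` D9 \<longleftrightarrow> (\<exists>X Y. (X, Y, t) \<in> D9)"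
  proof
    assume "t \<in> (\<lambda>(X, Y, t). t) ` D9"
    then obtain p where "p \<in> D9" "t = (\<lambda>(X, Y, t). t) p" by blast
    then show "\<exists>X Y. (X, Y, t) \<in> D9" by (cases p) auto
  next
    assume "\<exists>X Y. (X, Y, t) \<in> D9"
    then obtain X Y where "(X, Y, t) \<in> D9" by blast
    then show "t \<in> (\<lambda>(X, Y, t). t) ` D9" by (intro image_eqI[of _ _ "(X, Y, t)"]) auto
  qed
  show "t \<in> (\<lambda>(X, Y, t). t) ` D9 \<longleftrightarrow> t \<in> (C1 \<inter> {t. cmod t > 1}) \<union> (C2 \<inter> {t. cmod t > 1})"
  proof (cases "x^2+y^2 > 1")
    case False
    then have "\<not> cmod t > 1" using ncm t by blast
    then show ?thesis unfolding img D9_def by auto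
  next
    case True
    have "t \<in> (\<lambda>(X, Y, t). t) ` D9 \<longleftrightarrow> (x^2+y^2-1)^2 = (-2*x)^2"
      using img point[OF True] unfolding t by simp
    also have "\<dots> \<longleftrightarrow> x^2+y^2-1 = 2*x \<or> x^2+y^2-1 = -2*x"
      using power2_eq_iff[of "x^2+y^2-1" "-2*x"] by auto
    also have "\<dots> \<longleftrightarrow> t \<in> (C1 \<inter> {t. cmod t > 1}) \<union> (C2 \<inter> {t. cmod t > 1})"
      using True ncm[of x y] circ1[of x y] circ2[of x y] unfolding t by auto
    finally show ?thesis .
  qed
qed

end
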